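(* Let $\underline{p}\in\Theta$, $\delta>0$, and $\underline{v}\in\mathbb{R}^S$ with $v_{x_1}\neq v_{x_2}$ for some $x_1,x_2\in S$. Then $C(\underline{p},\underline{v},\delta)=\mu_q^*$, where $(\mu_q^*,\lambda)\in\mathbb{R}^2$ satisfies the system $$\sum_{x\in S}p_x\ln\Big(1+\frac{v_x-\mu_q^*}{\lambda}\Big)=\delta,\qquad \sum_{x\in S}p_x\frac{\lambda}{\lambda+v_x-\mu_q^*}=1,$$ together with $\mu_p<\mu_q^*<V$ and $\lambda<\mu_q^*-V$.
   Context: $S$ is a finite set and $\Theta=\{\underline{q}\in\mathbb{R}^{S}:\sum_{y\in S}q_y=1,\ q_y>0\ \forall y\in S\}$ is the set of strictly positive probability vectors on $S$. The Kullback–Leibler divergence is $\mathbf{I}(\underline{p},\underline{q})=\sum_{x\in S}p_x\ln(p_x/q_x)$. For $\underline{p}\in\Theta$, $\underline{v}\in\mathbb{R}^S$, $\delta\in\mathbb{R}$, define $C(\underline{p},\underline{v},\delta)=\sup_{\underline{q}\in\Theta}\{\sum_{x\in S}q_xv_x:\mathbf{I}(\underline{p},\underline{q})\le\delta\}$. Write $\mu_p=\sum_{x\in S}p_xv_x$ and $V=\max_{x\in S}v_x$. *)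

theory Defs
  imports Complex_Main
begin

text \<open>S is modelled by a finite type 'a; vectors in R^S are functions 'a => real.\<close>

definition Theta :: "('a::finite \<Rightarrow> real) set" where
  "Theta = {q. (\<Sum>y\<in>UNIV. q y) = 1 \<and> (\<forall>y. q y > 0)}"

definition KL :: "('a::finite \<Rightarrow> real) \<Rightarrow> ('a \<Rightarrow> real) \<Rightarrow> real" where
  "KL p q = (\<Sum>x\<in>UNIV. p x * ln (p x / q x))"

definition Cval :: "('a::finite \<Rightarrow> real) \<Rightarrow> ('a \<Rightarrow> real) \<Rightarrow> real \<Rightarrow> real" where
  "Cval p v \<delta> = Sup {(\<Sum>x\<in>UNIV. q x * v x) | q. q \<in> Theta \<and> KL p q \<le> \<delta>}"

definition solves_sys :: "('a::finite \<Rightarrow> real) \<Rightarrow> ('a \<Rightarrow> real) \<Rightarrow> real \<Rightarrow> real \<Rightarrow> real \<Rightarrow> bool" where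
  "solves_sys p v \<delta> mu lam \<longleftrightarrow>
     (\<Sum>x\<in>UNIV. p x * ln (1 + (v x - mu) / lam)) = \<delta> \<and>
     (\<Sum>x\<in>UNIV. p x * (lam / (lam + v x - mu))) = 1 \<and>
     (\<Sum>x\<in>UNIV. p x * v x) < mu \<and> mu < Max (range v) \<and>
     lam < mu - Max (range v)"

end

theory Submission
  imports Defs
begin

lemma upper_aux:
  fixes p b q :: "'a::finite \<Rightarrow> real"
  assumes pp: "\<forall>x. p x > 0" and ps: "(\<Sum>x\<in>UNIV. p x) = 1"
    and bp: "\<forall>x. b x > 0" and hb: "(\<Sum>x\<in>UNIV. p x * ln (b x)) = \<delta>"
    and qp: "\<forall>x. q x > 0" and kl: "KL p q \<le> \<delta>"
  shows "(\<Sum>x\<in>UNIV. q x * b x) \<ge> 1"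
proof -
  have each: "p x * ln (b x) - p x * ln (p x / q x) \<le> q x * b x - p x" for x
  proof -
    have pos: "q x * b x / p x > 0" using pp qp bp by auto
    have a: "p x > 0" "q x > 0" "b x > 0" using pp[rule_format, of x] qp[rule_format, of x] bp[rule_format, of x] by auto
    have "ln (q x * b x / p x) = ln (q x) + ln (b x) - ln (p x)"
      using a by (simp add: ln_div ln_mult)
    moreover have "ln (p x / q x) = ln (p x) - ln (q x)" using a by (simp add: ln_div)
    ultimately have "ln (q x * b x / p x) = ln (b x) - ln (p x / q x)" by simp
    moreover have "p x * ln (q x * b x / p x) \<le> p x * (q x * b x / p x - 1)"
      by (rule mult_left_mono[OF ln_le_minus_one[OF pos]]) (use a in auto)
    moreover have "p x * (q x * b x / p x - 1) = q x * b x - p x"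
      using a by (simp add: field_simps)
    ultimately show ?thesis by (simp add: right_diff_distrib)
  qed
  have "(\<Sum>x\<in>UNIV. p x * ln (b x) - p x * ln (p x / q x)) \<le> (\<Sum>x\<in>UNIV. q x * b x - p x)"
    by (rule sum_mono) (rule each)
  then have "\<delta> - KL p q \<le> (\<Sum>x\<in>UNIV. q x * b x) - 1"
    by (simp add: sum_subtractf hb ps KL_def)
  then show ?thesis using kl by linarith
qed

lemma part2:
  fixes p v :: "'a::finite \<Rightarrow> real" and \<delta> :: real
  assumes "p \<in> Theta" and sol: "solves_sys p v \<delta> mu lam"
  shows "Cval p v \<delta> = mu"
proof -
  define V where "V = Max (range v)"
  have vV: "v x \<le> V" for x unfolding V_def by (rule Max_ge) auto
  from sol have e1: "(\<Sum>x\<in>UNIV. p x * ln (1 + (v x - mu) / lam)) = \<delta>"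
    and e2: "(\<Sum>x\<in>UNIV. p x * (lam / (lam + v x - mu))) = 1"
    and muV: "mu < V" and lamV: "lam < mu - V"
    unfolding solves_sys_def V_def by auto
  from assms(1) have pp: "\<forall>x. p x > 0" and ps: "(\<Sum>x\<in>UNIV. p x) = 1"
    unfolding Theta_def by auto
  have lam0: "lam < 0" using muV lamV by linarith
  have neg: "lam + v x - mu < 0" for x using vV[of x] lamV by linarith
  define q where "q x = p x * (lam / (lam + v x - mu))" for x
  define b where "b x = 1 + (v x - mu) / lam" for x
  have b_eq: "b x = (lam + v x - mu) / lam" for x
    unfolding b_def using lam0 by (simp add: field_simps)
  have bp: "\<forall>x. b x > 0" using neg lam0 b_eq by (simp add: divide_neg_neg)
  have qp: "\<forall>x. q x > 0" unfolding q_def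
  proof
    fix x show "0 < p x * (lam / (lam + v x - mu))"
      using neg[of x] lam0 pp by (intro mult_pos_pos divide_neg_neg) auto
  qed
  have qs: "(\<Sum>x\<in>UNIV. q x) = 1" using e2 unfolding q_def .
  have "p x / q x = b x" for x
  proof -
    have "p x \<noteq> 0" "lam \<noteq> 0" "lam + v x - mu \<noteq> 0" using pp[rule_format, of x] neg[of x] lam0 by auto
    then show ?thesis unfolding q_def b_eq by (simp add: field_simps)
  qed
  then have klq: "KL p q = \<delta>" unfolding KL_def using e1 b_def by simp
  have qv: "q x * v x = q x * mu + p x * lam - lam * q x" for x
  proof -
    have d: "lam + v x - mu \<noteq> 0" using neg[of x] by auto
    have "q x * (lam + v x - mu) = p x * lam" unfolding q_def using d by simp
    then show ?thesis by (simp add: algebra_simps)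
  qed
  have qmean: "(\<Sum>x\<in>UNIV. q x * v x) = mu"
    by (simp add: qv sum.distrib sum_subtractf sum_distrib_left[symmetric]
        sum_distrib_right[symmetric] qs ps)
  have ub: "(\<Sum>x\<in>UNIV. q' x * v x) \<le> mu" if "q' \<in> Theta" "KL p q' \<le> \<delta>" for q'
  proof -
    from that have q'p: "\<forall>x. q' x > 0" and q's: "(\<Sum>x\<in>UNIV. q' x) = 1"
      unfolding Theta_def by auto
    have "(\<Sum>x\<in>UNIV. q' x * b x) \<ge> 1"
      by (rule upper_aux[OF pp ps bp _ q'p that(2)]) (simp add: b_def e1)
    moreover have "(\<Sum>x\<in>UNIV. q' x * b x) = 1 + ((\<Sum>x\<in>UNIV. q' x * v x) - mu) / lam"
      unfolding b_def using lam0
      by (simp add: algebra_simps sum.distrib q's sum_divide_distrib[symmetric]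
          sum_subtractf sum_distrib_right[symmetric] diff_divide_distrib
          sum_distrib_left[symmetric])
    ultimately have "((\<Sum>x\<in>UNIV. q' x * v x) - mu) / lam \<ge> 0" by linarith
    then show ?thesis using lam0 by (simp add: divide_nonneg_neg zero_le_divide_iff)
  qed
  have qT: "q \<in> Theta" unfolding Theta_def using qs qp by auto
  show ?thesis unfolding Cval_def
    by (rule cSup_eq_maximum) (use qT klq qmean ub in auto)
qed

lemma part1:
  fixes p v :: "'a::finite \<Rightarrow> real" and \<delta> :: real
  assumes "p \<in> Theta" and dpos: "\<delta> > 0" and "\<exists>x1 x2. v x1 \<noteq> v x2"
  shows "\<exists>mu lam. solves_sys p v \<delta> mu lam"
proof -
  from assms(1) have pp: "\<And>x. p x > 0" and ps: "(\<Sum>x\<in>UNIV. p x) = 1"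
    unfolding Theta_def by auto
  define V where "V = Max (range v)"
  define m where "m = Min (range v)"
  have vV: "v x \<le> V" for x unfolding V_def by (rule Max_ge) auto
  have mv: "m \<le> v x" for x unfolding m_def by (rule Min_le) auto
  have "V \<in> range v" unfolding V_def by (rule Max_in) auto
  then obtain x0 where x0: "v x0 = V" by auto
  obtain x1 where x1: "v x1 < V"
    using assms(3) vV x0 by (metis order_less_le)
  define D where "D s = (\<Sum>x\<in>UNIV. p x * ln (s - v x)) + ln (\<Sum>x\<in>UNIV. p x / (s - v x))" for s
  have Hpos: "(\<Sum>x\<in>UNIV. p x / (s - v x)) > 0" if "s > V" for s
  proof -
    have "p x0 / (s - v x0) > 0" using pp that x0 by simp
    moreover have "p x0 / (s - v x0) \<le> (\<Sum>x\<in>UNIV. p x / (s - v x))"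
      by (rule member_le_sum) (use pp vV that in \<open>auto intro!: divide_nonneg_pos less_imp_le[OF pp] order.strict_trans1[OF vV] simp: less_diff_eq\<close>)
    ultimately show ?thesis by linarith
  qed
  have Dup: "D s \<le> ln (s - m) - ln (s - V)" if sV: "s > V" for s
  proof -
    have "(\<Sum>x\<in>UNIV. p x * ln (s - v x)) \<le> (\<Sum>x\<in>UNIV. p x * ln (s - m))"
    proof (rule sum_mono)
      fix x
      have "s - v x > 0" using vV[of x] sV by linarith
      then have "ln (s - v x) \<le> ln (s - m)" using mv[of x] by simp
      then show "p x * ln (s - v x) \<le> p x * ln (s - m)"
        using pp[of x] by (simp add: mult_left_mono)
    qed
    also have "\<dots> = ln (s - m)" by (simp add: sum_distrib_right[symmetric] ps)
    finally have A: "(\<Sum>x\<in>UNIV. p x * ln (s - v x)) \<le> ln (s - m)" .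
    have "(\<Sum>x\<in>UNIV. p x / (s - v x)) \<le> (\<Sum>x\<in>UNIV. p x / (s - V))"
    proof (rule sum_mono)
      fix x
      have "s - v x > 0" using vV[of x] sV by linarith
      then show "p x / (s - v x) \<le> p x / (s - V)"
        using pp[of x] vV[of x] sV by (intro divide_left_mono) auto
    qed
    also have "\<dots> = 1 / (s - V)" by (simp add: sum_divide_distrib[symmetric] ps)
    finally have "ln (\<Sum>x\<in>UNIV. p x / (s - v x)) \<le> ln (1 / (s - V))"
      using Hpos[OF sV] sV by (subst ln_le_cancel_iff) auto
    also have "\<dots> = - ln (s - V)" using sV by (simp add: ln_div)
    finally show ?thesis using A unfolding D_def by linarith
  qed
  define L1 where "L1 = ln (V - v x1)"
  have Dlow: "D s \<ge> p x1 * L1 + ln (p x0) - p x1 * ln (s - V)" if sV: "s > V" for s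
  proof -
    have nn: "0 \<le> p x * (ln (s - v x) - ln (s - V))" for x
    proof -
      have "s - v x > 0" using vV[of x] sV by linarith
      then have "ln (s - V) \<le> ln (s - v x)" using vV[of x] sV by simp
      then show ?thesis using pp[of x] by simp
    qed
    have "p x1 * (ln (s - v x1) - ln (s - V)) \<le> (\<Sum>x\<in>UNIV. p x * (ln (s - v x) - ln (s - V)))"
      by (rule member_le_sum) (use nn in auto)
    also have "\<dots> = (\<Sum>x\<in>UNIV. p x * ln (s - v x)) - ln (s - V)"
      by (simp add: right_diff_distrib sum_subtractf sum_distrib_right[symmetric] ps)
    finally have A0: "p x1 * (ln (s - v x1) - ln (s - V)) \<le> (\<Sum>x\<in>UNIV. p x * ln (s - v x)) - ln (s - V)" .
    have "ln (V - v x1) \<le> ln (s - v x1)" using x1 sV by simp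
    then have "p x1 * L1 \<le> p x1 * ln (s - v x1)" unfolding L1_def using pp[of x1]
      by (simp add: mult_left_mono)
    with A0 have A: "(\<Sum>x\<in>UNIV. p x * ln (s - v x)) \<ge> ln (s - V) + p x1 * L1 - p x1 * ln (s - V)"
      by (simp add: right_diff_distrib)
    have "p x0 / (s - v x0) \<le> (\<Sum>x\<in>UNIV. p x / (s - v x))"
      by (rule member_le_sum) (use pp vV that in \<open>auto intro!: divide_nonneg_pos less_imp_le[OF pp] order.strict_trans1[OF vV] simp: less_diff_eq\<close>)
    moreover have "p x0 / (s - v x0) > 0" using pp x0 sV by simp
    ultimately have "ln (p x0 / (s - v x0)) \<le> ln (\<Sum>x\<in>UNIV. p x / (s - v x))" by simp
    moreover have "ln (p x0 / (s - v x0)) = ln (p x0) - ln (s - V)"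
      using pp[of x0] x0 sV by (simp add: ln_div)
    ultimately show ?thesis using A unfolding D_def by linarith
  qed
  define K where "K = (p x1 * L1 + ln (p x0) - \<delta>) / p x1"
  define s1 where "s1 = V + min (1/2) (exp (K - 1))"
  have s1V: "s1 > V" unfolding s1_def by simp
  have "ln (s1 - V) \<le> ln (exp (K - 1))" unfolding s1_def
    by (subst ln_le_cancel_iff) (auto simp: min_def)
  then have "ln (s1 - V) < K" by simp
  then have "p x1 * ln (s1 - V) < p x1 * K" using pp[of x1] by simp
  also have "p x1 * K = p x1 * L1 + ln (p x0) - \<delta>" unfolding K_def using pp[of x1] by simp
  finally have D1: "D s1 > \<delta>" using Dlow[OF s1V] by linarith
  define e where "e = exp \<delta>"
  have e1: "e > 1" unfolding e_def using dpos by simp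
  define s2 where "s2 = max (V + 1) ((e * V - m) / (e - 1) + 1)"
  have s2V: "s2 > V" unfolding s2_def by simp
  have "s2 \<ge> (e * V - m) / (e - 1) + 1" unfolding s2_def by simp
  then have "s2 * (e - 1) \<ge> (e * V - m) + (e - 1)" using e1
    by (simp add: field_simps)
  then have lt: "s2 - m < e * (s2 - V)" using e1 by (simp add: algebra_simps)
  have "s2 - m > 0" using s2V mv[of x0] x0 by linarith
  then have "ln (s2 - m) < ln (e * (s2 - V))" using lt by simp
  also have "\<dots> = \<delta> + ln (s2 - V)" unfolding e_def using s2V by (simp add: ln_mult)
  finally have D2: "D s2 < \<delta>" using Dup[OF s2V] by linarith
  have "s1 \<le> V + 1/2" unfolding s1_def by simp
  moreover have "V + 1 \<le> s2" unfolding s2_def by simp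
  ultimately have s12: "s1 \<le> s2" by linarith
  have cont: "continuous_on {s1..s2} D"
  proof -
    have "\<forall>s\<in>{s1..s2}. \<forall>x. s - v x > 0" 
    proof (intro ballI allI)
      fix s x assume "s \<in> {s1..s2}"
      then show "s - v x > 0" using s1V vV[of x] by auto
    qed
    moreover have "\<forall>s\<in>{s1..s2}. (\<Sum>x\<in>UNIV. p x / (s - v x)) > 0"
    proof
      fix s assume "s \<in> {s1..s2}"
      then have "s > V" using s1V by auto
      then show "(\<Sum>x\<in>UNIV. p x / (s - v x)) > 0" by (rule Hpos)
    qed
    ultimately show ?thesis unfolding D_def
      by (intro continuous_intros) auto
  qed
  obtain s where s: "s1 \<le> s" "s \<le> s2" "D s = \<delta>"
    using IVT2'[of D s2 \<delta> s1, OF _ _ s12 cont] D1 D2 by auto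
  have sV: "s > V" using s s1V by linarith
  have sv: "s - v x > 0" for x using vV[of x] sV by linarith
  define H where "H = (\<Sum>x\<in>UNIV. p x / (s - v x))"
  have H0: "H > 0" unfolding H_def using Hpos[OF sV] .
  define h where "h = 1 / H"
  have h0: "h > 0" unfolding h_def using H0 by simp
  show ?thesis
  proof (intro exI)
    show "solves_sys p v \<delta> (s - h) (- h)"
      unfolding solves_sys_def
    proof (intro conjI)
      have r1: "1 + (v x - (s - h)) / - h = (s - v x) * H" for x
        using h0 H0 unfolding h_def by (simp add: field_simps)
      have "(\<Sum>x\<in>UNIV. p x * ln (1 + (v x - (s - h)) / - h))
          = (\<Sum>x\<in>UNIV. p x * ln (s - v x) + p x * ln H)"
        unfolding r1
      proof (rule sum.cong)
        fix x
        have "s - v x > 0" by (rule sv)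
        then show "p x * ln ((s - v x) * H) = p x * ln (s - v x) + p x * ln H"
          using H0 by (simp add: ln_mult distrib_left)
      qed simp
      also have "\<dots> = D s" unfolding D_def H_def
        by (simp add: sum.distrib sum_distrib_right[symmetric] ps)
      finally show "(\<Sum>x\<in>UNIV. p x * ln (1 + (v x - (s - h)) / - h)) = \<delta>" using s by simp
    next
      have r2: "p x * (- h / (- h + v x - (s - h))) = h * (p x / (s - v x))" for x
      proof -
        have "- h + v x - (s - h) = - (s - v x)" by simp
        moreover have "s - v x \<noteq> 0" using sv[of x] by simp
        ultimately show ?thesis by (simp add: field_simps)
      qed
      show "(\<Sum>x\<in>UNIV. p x * (- h / (- h + v x - (s - h)))) = 1"
      proof -
        have "(\<Sum>x\<in>UNIV. p x * (- h / (- h + v x - (s - h)))) = (\<Sum>x\<in>UNIV. h * (p x / (s - v x)))"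
          by (rule sum.cong[OF refl]) (rule r2)
        also have "\<dots> = h * H" unfolding H_def by (rule sum_distrib_left[symmetric])
        also have "\<dots> = 1" unfolding h_def using H0 by simp
        finally show ?thesis .
      qed
    next
      define A where "A = (\<Sum>x\<in>UNIV. p x * (s - v x))"
      have A_eq: "A = s - (\<Sum>x\<in>UNIV. p x * v x)" unfolding A_def
        by (simp add: right_diff_distrib sum_subtractf sum_distrib_right[symmetric] ps)
      have A0: "A > 0" unfolding A_def using pp sv
        by (intro sum_pos) (auto intro: mult_pos_pos)
      have ex: "\<exists>x\<in>UNIV. 0 < p x * (s - v x - A)^2 / (s - v x)"
      proof (cases "s - v x0 = A")
        case True
        then have "s - v x1 - A \<noteq> 0" using x1 x0 by simp
        then show ?thesis using pp[of x1] sv[of x1] by (intro bexI[of _ x1]) auto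
      next
        case False
        then show ?thesis using pp[of x0] sv[of x0] by (intro bexI[of _ x0]) auto
      qed
      have "0 < (\<Sum>x\<in>UNIV. p x * (s - v x - A)^2 / (s - v x))"
      proof -
        from ex obtain xx where xx: "0 < p xx * (s - v xx - A)^2 / (s - v xx)" by blast
        have nn: "0 \<le> p i * (s - v i - A)^2 / (s - v i)" for i
          using pp[of i] sv[of i] by simp
        show ?thesis by (rule sum_pos2[of UNIV xx]) (use xx nn in auto)
      qed
      also have "\<dots> = (\<Sum>x\<in>UNIV. p x * (s - v x) - 2 * A * p x + A^2 * (p x / (s - v x)))"
      proof (rule sum.cong)
        fix x
        have "s - v x \<noteq> 0" using sv[of x] by simp
        then show "p x * (s - v x - A)^2 / (s - v x) = p x * (s - v x) - 2 * A * p x + A^2 * (p x / (s - v x))"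
          by (simp add: field_simps power2_eq_square)
      qed simp
      also have "\<dots> = (\<Sum>x\<in>UNIV. p x * (s - v x)) - (\<Sum>x\<in>UNIV. 2 * A * p x) + (\<Sum>x\<in>UNIV. A^2 * (p x / (s - v x)))"
        by (simp add: sum.distrib sum_subtractf)
      also have "\<dots> = A - 2 * A + A^2 * H"
        unfolding A_def[symmetric] H_def sum_distrib_left[symmetric] using ps by simp
      finally have "A * (A * H) > A * 1" by (simp add: power2_eq_square algebra_simps)
      then have "A * H > 1" using A0 by simp
      then have "h < A" unfolding h_def using H0 by (simp add: field_simps)
      then show "(\<Sum>x\<in>UNIV. p x * v x) < s - h" using A_eq by linarith
    next
      have "H < (\<Sum>x\<in>UNIV. p x / (s - V))" unfolding H_def
      proof (rule sum_strict_mono_ex1)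
        show "\<forall>x\<in>UNIV. p x / (s - v x) \<le> p x / (s - V)"
          using less_imp_le[OF pp] vV sV sv by (auto intro!: divide_left_mono)
        show "\<exists>a\<in>UNIV. p a / (s - v a) < p a / (s - V)"
          using pp[of x1] x1 sV by (intro bexI[of _ x1]) (auto intro!: divide_strict_left_mono)
      qed simp
      also have "\<dots> = 1 / (s - V)" by (simp add: sum_divide_distrib[symmetric] ps)
      finally have "H * (s - V) < 1" using sV by (simp add: field_simps)
      then have "s - V < h" unfolding h_def using H0 by (simp add: field_simps)
      then show "s - h < Max (range v)" using V_def by linarith
    next
      show "- h < s - h - Max (range v)" using sV V_def by linarith
    qed
  qed
qed

theorem theorem2:
  fixes p v :: "'a::finite \<Rightarrow> real" and \<delta> :: real
  assumes "p \<in> Theta" and "\<delta> > 0" and "\<exists>x1 x2. v x1 \<noteq> v x2"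
  shows "(\<exists>mu lam. solves_sys p v \<delta> mu lam) \<and>
         (\<forall>mu lam. solves_sys p v \<delta> mu lam \<longrightarrow> Cval p v \<delta> = mu)"
  using part1[OF assms] part2[OF assms(1)] by blast

end
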